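(* A group $G$ is isomorphic to an automaton group if and only if $G$ is isomorphic to an expanding automaton semigroup. Likewise, a group $G$ is isomorphic to a self-similar group if and only if $G$ is isomorphic to an expanding self-similar semigroup.
   Context: An expanding automaton is a quadruple $(Q,\Sigma,t,o)$ with $Q$ a set of states, $\Sigma$ a finite alphabet, $t:Q\times\Sigma\to Q$ and $o:Q\times\Sigma\to\Sigma^+$; a synchronous automaton has $o:Q\times\Sigma\to\Sigma$, and it is invertible if for each $q$ the map $\sigma\mapsto o(q,\sigma)$ is a permutation of $\Sigma$. Each state $q$ induces $q:\Sigma^*\to\Sigma^*$ by $q(\emptyset)=\emptyset$, $q(\sigma w)=o(q,\sigma)\,q'(w)$ with $q'=t(q,\sigma)$. An expanding automaton semigroup is the semigroup of maps generated under composition by the states of an expanding automaton with finitely many states; an expanding self-similar semigroup is the same allowing infinitely many states. An automaton group is the group generated by the states of a finite-state invertible synchronous automaton (the states act as bijections); a self-similar group is the group generated by the states of an invertible synchronous automaton with possibly infinitely many states. *)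

theory Defs
  imports "HOL-Algebra.Algebra"
begin

primrec induced :: "('q \<Rightarrow> nat \<Rightarrow> 'q) \<Rightarrow> ('q \<Rightarrow> nat \<Rightarrow> nat list) \<Rightarrow> 'q \<Rightarrow> nat list \<Rightarrow> nat list" where
  "induced t out q [] = []"
| "induced t out q (a # w) = out q a @ induced t out (t q a) w"

definition state_map :: "nat set \<Rightarrow> ('q \<Rightarrow> nat \<Rightarrow> 'q) \<Rightarrow> ('q \<Rightarrow> nat \<Rightarrow> nat list) \<Rightarrow> 'q \<Rightarrow> (nat list \<Rightarrow> nat list)" where
  "state_map S t out q = (\<lambda>w \<in> lists S. induced t out q w)"

definition expanding_automaton :: "'q set \<Rightarrow> nat set \<Rightarrow> ('q \<Rightarrow> nat \<Rightarrow> 'q) \<Rightarrow> ('q \<Rightarrow> nat \<Rightarrow> nat list) \<Rightarrow> bool" where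
  "expanding_automaton Q S t out \<longleftrightarrow> finite S \<and>
     (\<forall>q\<in>Q. \<forall>a\<in>S. t q a \<in> Q \<and> out q a \<in> lists S \<and> out q a \<noteq> [])"

definition invertible_synchronous_automaton :: "'q set \<Rightarrow> nat set \<Rightarrow> ('q \<Rightarrow> nat \<Rightarrow> 'q) \<Rightarrow> ('q \<Rightarrow> nat \<Rightarrow> nat list) \<Rightarrow> bool" where
  "invertible_synchronous_automaton Q S t out \<longleftrightarrow> finite S \<and>
     (\<forall>q\<in>Q. \<forall>a\<in>S. t q a \<in> Q \<and> length (out q a) = 1 \<and> hd (out q a) \<in> S) \<and>
     (\<forall>q\<in>Q. bij_betw (\<lambda>a. hd (out q a)) S S)"

inductive_set gen_semigroup :: "'a set \<Rightarrow> ('a \<Rightarrow> 'a) set \<Rightarrow> ('a \<Rightarrow> 'a) set" for A F where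
  base: "f \<in> F \<Longrightarrow> f \<in> gen_semigroup A F"
| comp: "f \<in> gen_semigroup A F \<Longrightarrow> g \<in> gen_semigroup A F \<Longrightarrow> compose A f g \<in> gen_semigroup A F"

text \<open>The semigroup of maps as an algebra structure (the unit field is irrelevant:
 HOL-Algebra's homomorphisms/isomorphisms only refer to carrier and mult).\<close>
definition map_semigroup :: "'a set \<Rightarrow> ('a \<Rightarrow> 'a) set \<Rightarrow> ('a \<Rightarrow> 'a) monoid" where
  "map_semigroup A F = \<lparr>carrier = gen_semigroup A F, monoid.mult = compose A, one = (\<lambda>x\<in>A. x)\<rparr>"

definition automaton_semigroup_of :: "'q set \<Rightarrow> nat set \<Rightarrow> ('q \<Rightarrow> nat \<Rightarrow> 'q) \<Rightarrow> ('q \<Rightarrow> nat \<Rightarrow> nat list) \<Rightarrow> (nat list \<Rightarrow> nat list) monoid" where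
  "automaton_semigroup_of Q S t out = map_semigroup (lists S) (state_map S t out ` Q)"

definition automaton_group_of :: "'q set \<Rightarrow> nat set \<Rightarrow> ('q \<Rightarrow> nat \<Rightarrow> 'q) \<Rightarrow> ('q \<Rightarrow> nat \<Rightarrow> nat list) \<Rightarrow> (nat list \<Rightarrow> nat list) monoid" where
  "automaton_group_of Q S t out =
     (BijGroup (lists S)) \<lparr>carrier := generate (BijGroup (lists S)) (state_map S t out ` Q)\<rparr>"

definition iso_automaton_group :: "('g, 'b) monoid_scheme \<Rightarrow> bool" where
  "iso_automaton_group G \<longleftrightarrow> (\<exists>(Q::nat set) S t out. finite Q \<and>
     invertible_synchronous_automaton Q S t out \<and> G \<cong> automaton_group_of Q S t out)"

definition iso_expanding_automaton_semigroup :: "('g, 'b) monoid_scheme \<Rightarrow> bool" where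
  "iso_expanding_automaton_semigroup G \<longleftrightarrow> (\<exists>(Q::nat set) S t out. finite Q \<and>
     expanding_automaton Q S t out \<and> G \<cong> automaton_semigroup_of Q S t out)"

text \<open>States range over a type of cardinality
 of the continuum (nat set), which suffices since there are only continuum many
 maps on S*, and states inducing the same map can be identified.\<close>
definition iso_self_similar_group :: "('g, 'b) monoid_scheme \<Rightarrow> bool" where
  "iso_self_similar_group G \<longleftrightarrow> (\<exists>(Q::nat set set) S t out.
     invertible_synchronous_automaton Q S t out \<and> G \<cong> automaton_group_of Q S t out)"

definition iso_expanding_self_similar_semigroup :: "('g, 'b) monoid_scheme \<Rightarrow> bool" where
  "iso_expanding_self_similar_semigroup G \<longleftrightarrow> (\<exists>(Q::nat set set) S t out.
     expanding_automaton Q S t out \<and> G \<cong> automaton_semigroup_of Q S t out)"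

end

theory Submission
  imports Defs
begin


definition tw :: "('q \<Rightarrow> nat \<Rightarrow> 'q) \<Rightarrow> 'q \<Rightarrow> nat list \<Rightarrow> 'q" where
  "tw t q u = fold (\<lambda>a q. t q a) u q"

lemma induced_append:
  "induced t out q (u @ v) = induced t out q u @ induced t out (tw t q u) v"
  by (induction u arbitrary: q) (auto simp: tw_def)

lemma tw_in:
  assumes "\<forall>q\<in>Q. \<forall>a\<in>S. t q a \<in> Q" "q \<in> Q" "u \<in> lists S"
  shows "tw t q u \<in> Q"
  using assms(2,3) by (induction u arbitrary: q) (auto simp: tw_def assms(1))

lemma induced_exp:
  assumes "expanding_automaton Q S t out" "q \<in> Q" "w \<in> lists S"
  shows "induced t out q w \<in> lists S \<and> length (induced t out q w) \<ge> length w"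
  using assms(2,3)
proof (induction w arbitrary: q)
  case Nil then show ?case by simp
next
  case (Cons a w)
  have "t q a \<in> Q" "out q a \<in> lists S" "out q a \<noteq> []"
    using assms(1) Cons.prems by (auto simp: expanding_automaton_def)
  moreover have "length (out q a) \<ge> 1" using \<open>out q a \<noteq> []\<close> by (cases "out q a") auto
  ultimately show ?case using Cons.IH[of "t q a"] Cons.prems by auto
qed

lemma compose_at: "x \<in> A \<Longrightarrow> compose A f g x = f (g x)"
  by (simp add: compose_def)

lemma T_basic:
  assumes ea: "expanding_automaton Q S t out"
    and f: "f \<in> gen_semigroup (lists S) (state_map S t out ` Q)"
  shows "f \<in> extensional (lists S) \<and> f [] = [] \<and> (\<forall>w\<in>lists S. f w \<in> lists S \<and> length (f w) \<ge> length w)"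
  using f
proof (induction rule: gen_semigroup.induct)
  case (base f)
  then obtain q where "q \<in> Q" "f = state_map S t out q" by auto
  then show ?case using induced_exp[OF ea] by (auto simp: state_map_def extensional_def)
next
  case (comp f g)
  show ?case
  proof (intro conjI ballI)
    show "compose (lists S) f g \<in> extensional (lists S)" by (simp add: compose_def)
    show "compose (lists S) f g [] = []" using comp.IH by (simp add: compose_def)
    fix w assume w: "w \<in> lists S"
    have gw: "g w \<in> lists S" "length (g w) \<ge> length w" using comp.IH(2) w by auto
    then have "f (g w) \<in> lists S" "length (f (g w)) \<ge> length (g w)" using comp.IH(1) by auto
    then show "compose (lists S) f g w \<in> lists S" "length (compose (lists S) f g w) \<ge> length w"
      using gw w by (auto simp: compose_def)
  qed
qed

lemma T_section:
  assumes ea: "expanding_automaton Q S t out"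
    and f: "f \<in> gen_semigroup (lists S) (state_map S t out ` Q)"
  shows "\<forall>u\<in>lists S. \<exists>h\<in>gen_semigroup (lists S) (state_map S t out ` Q).
            \<forall>v\<in>lists S. f (u @ v) = f u @ h v"
  using f
proof (induction rule: gen_semigroup.induct)
  case (base f)
  then obtain q where q: "q \<in> Q" "f = state_map S t out q" by auto
  have cl: "\<forall>q\<in>Q. \<forall>a\<in>S. t q a \<in> Q" using ea by (auto simp: expanding_automaton_def)
  show ?case
  proof
    fix u assume u: "u \<in> lists S"
    let ?h = "state_map S t out (tw t q u)"
    have "?h \<in> gen_semigroup (lists S) (state_map S t out ` Q)"
      using tw_in[OF cl q(1) u] by (auto intro: gen_semigroup.base)
    moreover have "\<forall>v\<in>lists S. f (u @ v) = f u @ ?h v"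
      using u by (auto simp: q(2) state_map_def induced_append)
    ultimately show "\<exists>h\<in>gen_semigroup (lists S) (state_map S t out ` Q). \<forall>v\<in>lists S. f (u @ v) = f u @ h v"
      by blast
  qed
next
  case (comp f g)
  show ?case
  proof
    fix u assume u: "u \<in> lists S"
    obtain hg where hg: "hg \<in> gen_semigroup (lists S) (state_map S t out ` Q)"
      "\<forall>v\<in>lists S. g (u @ v) = g u @ hg v" using comp.IH(2) u by blast
    have gu: "g u \<in> lists S" using T_basic[OF ea comp.hyps(2)] u by blast
    obtain hf where hf: "hf \<in> gen_semigroup (lists S) (state_map S t out ` Q)"
      "\<forall>v\<in>lists S. f (g u @ v) = f (g u) @ hf v" using comp.IH(1) gu by blast
    have hgv: "\<forall>v\<in>lists S. hg v \<in> lists S" using T_basic[OF ea hg(1)] by blast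
    have "compose (lists S) hf hg \<in> gen_semigroup (lists S) (state_map S t out ` Q)"
      using hf(1) hg(1) by (rule gen_semigroup.comp)
    moreover have "\<forall>v\<in>lists S. compose (lists S) f g (u @ v) = compose (lists S) f g u @ compose (lists S) hf hg v"
      using u hg(2) hf(2) hgv by (simp add: compose_def)
    ultimately show "\<exists>h\<in>gen_semigroup (lists S) (state_map S t out ` Q). \<forall>v\<in>lists S. compose (lists S) f g (u @ v) = compose (lists S) f g u @ h v"
      by blast
  qed
qed




locale hardctx =
  fixes Q :: "'q set" and S t out and G :: "('g, 'b) monoid_scheme" and \<phi>
  assumes ea: "expanding_automaton Q S t out"
    and grp: "group G"
    and phi: "\<phi> \<in> iso G (automaton_semigroup_of Q S t out)"
begin

abbreviation "A \<equiv> lists S"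
abbreviation "T \<equiv> gen_semigroup A (state_map S t out ` Q)"
definition "e = \<phi> \<one>\<^bsub>G\<^esub>"

lemma carrT: "carrier (automaton_semigroup_of Q S t out) = T"
  by (simp add: automaton_semigroup_of_def map_semigroup_def)
lemma multT: "monoid.mult (automaton_semigroup_of Q S t out) = compose A"
  by (simp add: automaton_semigroup_of_def map_semigroup_def)

lemma phi_hom: "x \<in> carrier G \<Longrightarrow> y \<in> carrier G \<Longrightarrow> \<phi> (x \<otimes>\<^bsub>G\<^esub> y) = compose A (\<phi> x) (\<phi> y)"
  using phi by (simp add: iso_def hom_def multT)
lemma phi_bij: "bij_betw \<phi> (carrier G) T"
  using phi by (simp add: iso_def carrT)
lemma phi_surj: "f \<in> T \<Longrightarrow> \<exists>x\<in>carrier G. \<phi> x = f"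
  using phi_bij by (metis bij_betw_imp_surj_on imageE)

lemma eT: "e \<in> T"
  using phi_bij grp by (auto simp: e_def bij_betw_def group.is_monoid monoid.one_closed)

lemma e_comp: "f \<in> T \<Longrightarrow> compose A e f = f \<and> compose A f e = f"
proof -
  assume "f \<in> T"
  then obtain x where x: "x \<in> carrier G" "\<phi> x = f" using phi_surj by blast
  show ?thesis using phi_hom[OF _ x(1), of "\<one>\<^bsub>G\<^esub>"] phi_hom[OF x(1), of "\<one>\<^bsub>G\<^esub>"] x grp
    by (simp add: e_def group.is_monoid monoid.one_closed)
qed

lemma inverse: "f \<in> T \<Longrightarrow> \<exists>g\<in>T. compose A g f = e \<and> compose A f g = e"
proof -
  assume "f \<in> T"
  then obtain x where x: "x \<in> carrier G" "\<phi> x = f" using phi_surj by blast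
  let ?y = "inv\<^bsub>G\<^esub> x"
  have y: "?y \<in> carrier G" using grp x by (simp add: group.inv_closed)
  have "\<phi> ?y \<in> T" using phi_bij y by (auto simp: bij_betw_def)
  moreover have "compose A (\<phi> ?y) f = e" "compose A f (\<phi> ?y) = e"
    using phi_hom[OF y x(1)] phi_hom[OF x(1) y] x grp by (auto simp: e_def group.l_inv group.r_inv)
  ultimately show ?thesis by blast
qed

lemma idem: "h \<in> T \<Longrightarrow> compose A h h = h \<Longrightarrow> h = e"
proof -
  assume h: "h \<in> T" "compose A h h = h"
  then obtain x where x: "x \<in> carrier G" "\<phi> x = h" using phi_surj by blast
  have xx: "x \<otimes>\<^bsub>G\<^esub> x \<in> carrier G" using grp x by (simp add: group.is_monoid monoid.m_closed)
  have "\<phi> (x \<otimes>\<^bsub>G\<^esub> x) = \<phi> x" using phi_hom[OF x(1) x(1)] x h by simp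
  then have "x \<otimes>\<^bsub>G\<^esub> x = x" using phi_bij xx x(1) by (auto simp: bij_betw_def inj_on_def)
  then have "x = \<one>\<^bsub>G\<^esub>" using grp x by (simp add: group.l_cancel_one)
  then show ?thesis using x by (simp add: e_def)
qed

lemma basic: "f \<in> T \<Longrightarrow> f \<in> extensional A \<and> f [] = [] \<and> (\<forall>w\<in>A. f w \<in> A \<and> length (f w) \<ge> length w)"
  using T_basic[OF ea] by blast

lemma sect: "f \<in> T \<Longrightarrow> u \<in> A \<Longrightarrow> \<exists>h\<in>T. \<forall>v\<in>A. f (u @ v) = f u @ h v"
  using T_section[OF ea] by blast

lemma ee: "w \<in> A \<Longrightarrow> e (e w) = e w"
  using e_comp[OF eT] by (metis compose_at)

lemma sec_e:
  assumes a: "a \<in> S" and ea1: "e [a] = [a]"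
  shows "\<forall>v\<in>A. e (a # v) = a # e v"
proof -
  obtain h where h: "h \<in> T" "\<forall>v\<in>A. e ([a] @ v) = e [a] @ h v" using sect[OF eT, of "[a]"] a by auto
  have hv: "\<forall>v\<in>A. e (a # v) = a # h v" using h(2) ea1 by simp
  have hA: "\<forall>v\<in>A. h v \<in> A" using basic[OF h(1)] by blast
  have "compose A h h = h"
  proof (rule extensionalityI[where A = A])
    show "compose A h h \<in> extensional A" by (simp add: compose_def)
    show "h \<in> extensional A" using basic[OF h(1)] by blast
    fix v assume v: "v \<in> A"
    have "e (e (a # v)) = e (a # v)" using ee a v by simp
    then have "a # h (h v) = a # h v" using hv hA v a by simp
    then show "compose A h h v = h v" using v by (simp add: compose_def)
  qed
  then have "h = e" using idem h(1) by blast
  then show ?thesis using hv by simp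
qed

definition "C = {a\<in>S. e [a] = [a]}"

lemma CS: "C \<subseteq> S" by (auto simp: C_def)
lemma listsC: "lists C \<subseteq> A" using CS by auto

lemma fixC: "w \<in> A \<Longrightarrow> (e w = w \<longleftrightarrow> w \<in> lists C)"
proof (induction w)
  case Nil then show ?case using basic[OF eT] by simp
next
  case (Cons a v)
  have a: "a \<in> S" and v: "v \<in> A" using Cons.prems by auto
  show ?case
  proof
    assume fx: "e (a # v) = a # v"
    obtain h where h: "h \<in> T" "\<forall>v\<in>A. e ([a] @ v) = e [a] @ h v" using sect[OF eT, of "[a]"] a by auto
    have "length (h v) \<ge> length v" using basic[OF h(1)] v by blast
    moreover have "length (e [a]) \<ge> 1"
    proof -
      have "[a] \<in> A" using a by simp
      then have "length (e [a]) \<ge> length [a]" using basic[OF eT] by blast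
      then show ?thesis by simp
    qed
    moreover have "e [a] @ h v = a # v"
    proof -
      have "e ([a] @ v) = e [a] @ h v" using h(2) v by blast
      then show ?thesis using fx by simp
    qed
    moreover have "length (e [a]) + length (h v) = Suc (length v)"
      using \<open>e [a] @ h v = a # v\<close> by (metis length_append length_Cons)
    ultimately have len1: "length (e [a]) = 1" by linarith
    then obtain x where "e [a] = [x]" by (metis One_nat_def length_0_conv length_Suc_conv)
    then have "e [a] = [a]" using \<open>e [a] @ h v = a # v\<close> by simp
    then have aC: "a \<in> C" using a by (simp add: C_def)
    have "e (a # v) = a # e v" using sec_e[OF a \<open>e [a] = [a]\<close>] v by blast
    then have "e v = v" using fx by simp
    then show "a # v \<in> lists C" using Cons.IH v aC by simp
  next
    assume "a # v \<in> lists C"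
    then have aC: "a \<in> C" and vC: "v \<in> lists C" by auto
    then have "e [a] = [a]" by (simp add: C_def)
    then have "e (a # v) = a # e v" using sec_e[OF a] v by blast
    moreover have "e v = v" using Cons.IH v vC by blast
    ultimately show "e (a # v) = a # v" by simp
  qed
qed

lemma e_lC: "w \<in> A \<Longrightarrow> e w \<in> lists C"
proof -
  assume w: "w \<in> A"
  then have "e w \<in> A" using basic[OF eT] by blast
  then show ?thesis using fixC[of "e w"] ee[OF w] by blast
qed

lemma compT: "f \<in> T \<Longrightarrow> g \<in> T \<Longrightarrow> compose A f g = h \<Longrightarrow> w \<in> A \<Longrightarrow> f (g w) = h w"
  by (auto simp: compose_def)

lemma e_left: "f \<in> T \<Longrightarrow> w \<in> A \<Longrightarrow> e (f w) = f w"
  using compT[OF eT _ conjunct1[OF e_comp]] by blast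
lemma e_right: "f \<in> T \<Longrightarrow> w \<in> A \<Longrightarrow> f (e w) = f w"
  using compT[OF _ eT conjunct2[OF e_comp]] by blast
lemma e_id: "w \<in> lists C \<Longrightarrow> e w = w"
  using fixC listsC by blast

lemma B: assumes f: "f \<in> T" and w: "w \<in> lists C"
  shows "f w \<in> lists C \<and> length (f w) = length w"
proof -
  have wA: "w \<in> A" using w listsC by blast
  have fwA: "f w \<in> A" using basic[OF f] wA by blast
  have "e (f w) = f w" using e_left[OF f wA] .
  then have fwC: "f w \<in> lists C" using fixC fwA by blast
  obtain g where g: "g \<in> T" "compose A g f = e" using inverse[OF f] by blast
  have "g (f w) = e w" using compT[OF g(1) f g(2) wA] .
  also have "\<dots> = w" using fixC wA w by blast
  finally have "g (f w) = w" .
  moreover have "length (g (f w)) \<ge> length (f w)" using basic[OF g(1)] fwA by blast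
  ultimately have "length w \<ge> length (f w)" by simp
  moreover have "length (f w) \<ge> length w" using basic[OF f] wA by blast
  ultimately show ?thesis using fwC by simp
qed

lemma injC: "f \<in> T \<Longrightarrow> inj_on f (lists C)"
proof -
  assume f: "f \<in> T"
  obtain g where g: "g \<in> T" "compose A g f = e" using inverse[OF f] by blast
  show ?thesis
  proof (rule inj_onI)
    fix x y assume xy: "x \<in> lists C" "y \<in> lists C" "f x = f y"
    have xA: "x \<in> A" "y \<in> A" using xy listsC by blast+
    have "g (f x) = x" using compT[OF g(1) f g(2) xA(1)] e_id[OF xy(1)] by simp
    moreover have "g (f y) = y" using compT[OF g(1) f g(2) xA(2)] e_id[OF xy(2)] by simp
    ultimately show "x = y" using xy(3) by metis
  qed
qed

lemma bijC: "f \<in> T \<Longrightarrow> bij_betw f (lists C) (lists C)"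
proof -
  assume f: "f \<in> T"
  obtain g where g: "g \<in> T" "compose A f g = e" using inverse[OF f] by blast
  show ?thesis unfolding bij_betw_def
  proof
    show "inj_on f (lists C)" using injC f by blast
    show "f ` lists C = lists C"
    proof
      show "f ` lists C \<subseteq> lists C" using B f by blast
      show "lists C \<subseteq> f ` lists C"
      proof
        fix w assume w: "w \<in> lists C"
        have wA: "w \<in> A" using w listsC by blast
        have "f (g w) = w" using compT[OF f g(1) g(2) wA] e_id[OF w] by simp
        moreover have "g w \<in> lists C" using B g(1) w by blast
        ultimately show "w \<in> f ` lists C" by force
      qed
    qed
  qed
qed

end



context hardctx begin

definition "\<rho> f = restrict f (lists C)"

lemma smC: "state_map C t out q = \<rho> (state_map S t out q)"
  unfolding \<rho>_def state_map_def using listsC by (force simp: restrict_def)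

lemma smT: "q \<in> Q \<Longrightarrow> state_map S t out q \<in> T"
  by (auto intro: gen_semigroup.base)

lemma out_C: assumes q: "q \<in> Q" and a: "a \<in> C"
  shows "out q a = [hd (out q a)] \<and> hd (out q a) \<in> C"
proof -
  have aC: "[a] \<in> lists C" using a by simp
  have aA: "[a] \<in> A" using aC listsC by blast
  have "state_map S t out q [a] = out q a" using aA by (simp add: state_map_def)
  then have "out q a \<in> lists C \<and> length (out q a) = 1" using B[OF smT[OF q] aC] by simp
  then show ?thesis by (cases "out q a") auto
qed

lemma isa: "invertible_synchronous_automaton Q C t out"
  unfolding invertible_synchronous_automaton_def
proof (intro conjI ballI)
  show "finite C" using ea CS by (auto simp: expanding_automaton_def intro: finite_subset)
  fix q assume q: "q \<in> Q"
  {
    fix a assume a: "a \<in> C"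
    show "t q a \<in> Q" using ea q a CS by (auto simp: expanding_automaton_def)
    show "length (out q a) = 1" using out_C[OF q a] by (metis length_Cons list.size(3) One_nat_def)
    show "hd (out q a) \<in> C" using out_C[OF q a] by blast
  }
  show "bij_betw (\<lambda>a. hd (out q a)) C C"
  proof -
    have fin: "finite C" using ea CS by (auto simp: expanding_automaton_def intro: finite_subset)
    have sub: "(\<lambda>a. hd (out q a)) ` C \<subseteq> C" using out_C[OF q] by blast
    have inj: "inj_on (\<lambda>a. hd (out q a)) C"
    proof (rule inj_onI)
      fix a b assume ab: "a \<in> C" "b \<in> C" "hd (out q a) = hd (out q b)"
      have "out q a = out q b" using out_C[OF q ab(1)] out_C[OF q ab(2)] ab(3) by metis
      moreover have "state_map S t out q [a] = out q a" "state_map S t out q [b] = out q b"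
        using ab CS by (auto simp: state_map_def)
      ultimately have eq: "state_map S t out q [a] = state_map S t out q [b]" by simp
      have "[a] \<in> lists C" "[b] \<in> lists C" using ab by auto
      then have "[a] = [b]" by (rule inj_onD[OF injC[OF smT[OF q]] eq])
      then show "a = b" by simp
    qed
    show ?thesis using endo_inj_surj[OF fin sub inj] inj by (simp add: bij_betw_def)
  qed
qed

lemma rho_Bij: "f \<in> T \<Longrightarrow> \<rho> f \<in> Bij (lists C)"
proof -
  assume f: "f \<in> T"
  have "bij_betw (\<rho> f) (lists C) (lists C)"
    using bijC[OF f] unfolding \<rho>_def by (rule bij_betw_cong[THEN iffD1, rotated]) simp
  then show ?thesis by (simp add: Bij_def \<rho>_def)
qed

lemma rho_comp: "f \<in> T \<Longrightarrow> g \<in> T \<Longrightarrow> \<rho> (compose A f g) = compose (lists C) (\<rho> f) (\<rho> g)"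
proof -
  assume f: "f \<in> T" and g: "g \<in> T"
  show ?thesis
  proof (rule ext)
    fix w
    show "\<rho> (compose A f g) w = compose (lists C) (\<rho> f) (\<rho> g) w"
    proof (cases "w \<in> lists C")
      case True
      then have "w \<in> A" using listsC by blast
      moreover have "g w \<in> lists C" using B[OF g True] by blast
      ultimately show ?thesis using True by (simp add: \<rho>_def compose_def)
    next
      case False then show ?thesis by (simp add: \<rho>_def compose_def)
    qed
  qed
qed

abbreviation "BG \<equiv> BijGroup (lists C)"

lemma multBG: "f \<in> Bij (lists C) \<Longrightarrow> g \<in> Bij (lists C) \<Longrightarrow> f \<otimes>\<^bsub>BG\<^esub> g = compose (lists C) f g"
  by (simp add: BijGroup_def)

lemma rho_e: "\<rho> e = \<one>\<^bsub>BG\<^esub>"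
  using e_id by (auto simp: \<rho>_def BijGroup_def restrict_def)

lemma rho_inv: assumes f: "f \<in> T" shows "inv\<^bsub>BG\<^esub> (\<rho> f) \<in> \<rho> ` T"
proof -
  obtain g where g: "g \<in> T" "compose A g f = e" "compose A f g = e" using inverse[OF f] by blast
  have "inv\<^bsub>BG\<^esub> (\<rho> f) = (\<lambda>x\<in>lists C. inv_into (lists C) (\<rho> f) x)"
    using rho_Bij[OF f] by (rule inv_BijGroup)
  also have "\<dots> = \<rho> g"
  proof (rule ext)
    fix w
    show "(\<lambda>x\<in>lists C. inv_into (lists C) (\<rho> f) x) w = \<rho> g w"
    proof (cases "w \<in> lists C")
      case True
      have wA: "w \<in> A" using True listsC by blast
      have gw: "g w \<in> lists C" using B[OF g(1) True] by blast
      have "f (g w) = w" using compT[OF f g(1) g(3) wA] e_id[OF True] by simp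
      then have "\<rho> f (g w) = w" using gw by (simp add: \<rho>_def)
      moreover have "inj_on (\<rho> f) (lists C)" using rho_Bij[OF f] by (simp add: Bij_def bij_betw_def)
      ultimately have "inv_into (lists C) (\<rho> f) w = g w"
        using inv_into_f_eq gw by metis
      then show ?thesis using True by (simp add: \<rho>_def)
    next
      case False then show ?thesis by (simp add: \<rho>_def)
    qed
  qed
  finally show ?thesis using g(1) by blast
qed

lemma image_rho: "\<rho> ` T = generate BG (state_map C t out ` Q)"
proof
  show "\<rho> ` T \<subseteq> generate BG (state_map C t out ` Q)"
  proof
    fix x assume "x \<in> \<rho> ` T"
    then obtain f where f: "f \<in> T" "x = \<rho> f" by blast
    have "\<rho> f \<in> generate BG (state_map C t out ` Q)" using f(1)
    proof (induction rule: gen_semigroup.induct)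
      case (base f)
      then show ?case using smC by (auto intro: generate.incl)
    next
      case (comp f g)
      have "\<rho> (compose A f g) = \<rho> f \<otimes>\<^bsub>BG\<^esub> \<rho> g"
        using rho_comp[OF comp.hyps] multBG[OF rho_Bij[OF comp.hyps(1)] rho_Bij[OF comp.hyps(2)]] by simp
      then show ?case using comp.IH by (simp add: generate.eng)
    qed
    then show "x \<in> generate BG (state_map C t out ` Q)" using f by simp
  qed
next
  show "generate BG (state_map C t out ` Q) \<subseteq> \<rho> ` T"
  proof
    fix x assume "x \<in> generate BG (state_map C t out ` Q)"
    then show "x \<in> \<rho> ` T"
    proof (induction rule: generate.induct)
      case one
      then show ?case using rho_e eT by (metis image_eqI)
    next
      case (incl h)
      then show ?case using smC smT by auto
    next
      case (inv h)
      then obtain q where "q \<in> Q" "h = \<rho> (state_map S t out q)" using smC by auto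
      then show ?case using rho_inv smT by auto
    next
      case (eng h1 h2)
      then obtain f1 f2 where f: "f1 \<in> T" "f2 \<in> T" "h1 = \<rho> f1" "h2 = \<rho> f2" by blast
      have "h1 \<otimes>\<^bsub>BG\<^esub> h2 = \<rho> (compose A f1 f2)"
        using rho_comp[OF f(1,2)] multBG[OF rho_Bij[OF f(1)] rho_Bij[OF f(2)]] f(3,4) by simp
      moreover have "compose A f1 f2 \<in> T" using f(1,2) by (rule gen_semigroup.comp)
      ultimately show ?case by blast
    qed
  qed
qed

lemma rho_inj: "inj_on \<rho> T"
proof (rule inj_onI)
  fix f g assume fg: "f \<in> T" "g \<in> T" "\<rho> f = \<rho> g"
  show "f = g"
  proof (rule extensionalityI[where A = A])
    show "f \<in> extensional A" using basic[OF fg(1)] by blast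
    show "g \<in> extensional A" using basic[OF fg(2)] by blast
    fix w assume w: "w \<in> A"
    have ew: "e w \<in> lists C" using e_lC[OF w] .
    have "f w = f (e w)" using e_right[OF fg(1) w] by simp
    also have "\<dots> = \<rho> f (e w)" using ew by (simp add: \<rho>_def)
    also have "\<dots> = \<rho> g (e w)" using fg(3) by simp
    also have "\<dots> = g (e w)" using ew by (simp add: \<rho>_def)
    also have "\<dots> = g w" using e_right[OF fg(2) w] by simp
    finally show "f w = g w" .
  qed
qed

lemma hard_iso: "automaton_semigroup_of Q S t out \<cong> automaton_group_of Q C t out"
proof (rule is_isoI)
  show "\<rho> \<in> iso (automaton_semigroup_of Q S t out) (automaton_group_of Q C t out)"
  proof (rule isoI)
    show "bij_betw \<rho> (carrier (automaton_semigroup_of Q S t out)) (carrier (automaton_group_of Q C t out))"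
      using rho_inj image_rho by (simp add: carrT bij_betw_def automaton_group_of_def)
    show "\<rho> \<in> hom (automaton_semigroup_of Q S t out) (automaton_group_of Q C t out)"
      unfolding hom_def
    proof (intro CollectI conjI ballI)
      show "\<rho> \<in> carrier (automaton_semigroup_of Q S t out) \<rightarrow> carrier (automaton_group_of Q C t out)"
        using image_rho by (auto simp: carrT automaton_group_of_def)
      fix f g assume "f \<in> carrier (automaton_semigroup_of Q S t out)" "g \<in> carrier (automaton_semigroup_of Q S t out)"
      then have fg: "f \<in> T" "g \<in> T" by (auto simp: carrT)
      show "\<rho> (f \<otimes>\<^bsub>automaton_semigroup_of Q S t out\<^esub> g) = \<rho> f \<otimes>\<^bsub>automaton_group_of Q C t out\<^esub> \<rho> g"
        using rho_comp[OF fg] multBG[OF rho_Bij[OF fg(1)] rho_Bij[OF fg(2)]]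
        by (simp add: multT automaton_group_of_def)
    qed
  qed
qed

end

lemma hard_dir:
  assumes "expanding_automaton Q S t out" "group G" "G \<cong> automaton_semigroup_of Q S t out"
  shows "\<exists>C. invertible_synchronous_automaton Q C t out \<and> G \<cong> automaton_group_of Q C t out"
proof -
  obtain \<phi> where phi: "\<phi> \<in> iso G (automaton_semigroup_of Q S t out)" using assms(3) by (auto simp: is_iso_def)
  interpret hardctx Q S t out G \<phi> using assms(1,2) phi by (simp add: hardctx_def)
  show ?thesis using isa hard_iso assms(3) iso_trans by blast
qed




locale easyctx =
  fixes Q :: "'q set" and S t out and z :: 'r and j1 j2 :: "'q \<Rightarrow> 'r"
  assumes isa: "invertible_synchronous_automaton Q S t out"
    and inj1: "inj j1" and inj2: "inj j2"
    and z1: "z \<notin> range j1" and z2: "z \<notin> range j2"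
    and d12: "range j1 \<inter> range j2 = {}"
begin

definition "sg q a = hd (out q a)"
definition "sgi q b = inv_into S (sg q) b"

definition "t' s a = (if s \<in> range j1 then j1 (t (inv_into UNIV j1 s) a)
   else if s \<in> range j2 then j2 (t (inv_into UNIV j2 s) (sgi (inv_into UNIV j2 s) a)) else z)"
definition "out' s a = (if s \<in> range j1 then out (inv_into UNIV j1 s) a
   else if s \<in> range j2 then [sgi (inv_into UNIV j2 s) a] else [a])"

definition "Q' = insert z (j1 ` Q \<union> j2 ` Q)"

lemma t'1[simp]: "t' (j1 q) a = j1 (t q a)" by (simp add: t'_def inv_f_f[OF inj1])
lemma out'1[simp]: "out' (j1 q) a = out q a" by (simp add: out'_def inv_f_f[OF inj1])
lemma n21: "j2 q \<notin> range j1" using d12 by blast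
lemma t'2[simp]: "t' (j2 q) a = j2 (t q (sgi q a))" using n21 by (simp add: t'_def inv_f_f[OF inj2])
lemma out'2[simp]: "out' (j2 q) a = [sgi q a]" using n21 by (simp add: out'_def inv_f_f[OF inj2])
lemma t'z[simp]: "t' z a = z" using z1 z2 by (simp add: t'_def)
lemma out'z[simp]: "out' z a = [a]" using z1 z2 by (simp add: out'_def)

lemma bijq: "q \<in> Q \<Longrightarrow> bij_betw (sg q) S S"
  using isa by (simp add: invertible_synchronous_automaton_def sg_def[abs_def])

lemma outq: "q \<in> Q \<Longrightarrow> a \<in> S \<Longrightarrow> out q a = [sg q a] \<and> sg q a \<in> S \<and> t q a \<in> Q"
proof -
  assume q: "q \<in> Q" and a: "a \<in> S"
  have "length (out q a) = 1" "hd (out q a) \<in> S" "t q a \<in> Q"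
    using isa q a by (auto simp: invertible_synchronous_automaton_def)
  then show ?thesis by (cases "out q a") (auto simp: sg_def)
qed

lemma sig_i: "q \<in> Q \<Longrightarrow> a \<in> S \<Longrightarrow> sgi q a \<in> S \<and> sg q (sgi q a) = a"
proof -
  assume q: "q \<in> Q" and a: "a \<in> S"
  have b: "bij_betw (sg q) S S" by (rule bijq[OF q])
  have "a \<in> sg q ` S" using b a by (simp add: bij_betw_def)
  then show ?thesis using bij_betw_inv_into_right[OF b a] by (simp add: sgi_def inv_into_into)
qed

lemma i_sig: "q \<in> Q \<Longrightarrow> a \<in> S \<Longrightarrow> sgi q (sg q a) = a"
  using bijq[of q] by (simp add: sgi_def bij_betw_def inv_into_f_f)

lemma ind1: "q \<in> Q \<Longrightarrow> w \<in> lists S \<Longrightarrow> induced t' out' (j1 q) w = induced t out q w"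
proof (induction w arbitrary: q)
  case Nil then show ?case by simp
next
  case (Cons a w)
  then show ?case using outq[of q a] by simp
qed

lemma indz: "induced t' out' z w = w"
  by (induction w) simp_all

lemma ind_lists: "q \<in> Q \<Longrightarrow> w \<in> lists S \<Longrightarrow> induced t out q w \<in> lists S"
proof (induction w arbitrary: q)
  case Nil then show ?case by simp
next
  case (Cons a w)
  then show ?case using outq[of q a] by simp
qed

lemma ind2_lists: "q \<in> Q \<Longrightarrow> w \<in> lists S \<Longrightarrow> induced t' out' (j2 q) w \<in> lists S"
proof (induction w arbitrary: q)
  case Nil then show ?case by simp
next
  case (Cons a w)
  have "sgi q a \<in> S" "t q (sgi q a) \<in> Q" using sig_i[of q a] outq[of q "sgi q a"] Cons.prems by auto
  then show ?case using Cons by simp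
qed

lemma ind2a: "q \<in> Q \<Longrightarrow> w \<in> lists S \<Longrightarrow> induced t out q (induced t' out' (j2 q) w) = w"
proof (induction w arbitrary: q)
  case Nil then show ?case by simp
next
  case (Cons a w)
  have a: "a \<in> S" and w: "w \<in> lists S" using Cons.prems by auto
  have b: "sgi q a \<in> S" "sg q (sgi q a) = a" using sig_i[OF Cons.prems(1) a] by auto
  have o: "out q (sgi q a) = [a]" "t q (sgi q a) \<in> Q" using outq[OF Cons.prems(1) b(1)] b(2) by auto
  show ?case using o Cons.IH[OF o(2) w] by simp
qed

lemma ind2b: "q \<in> Q \<Longrightarrow> w \<in> lists S \<Longrightarrow> induced t' out' (j2 q) (induced t out q w) = w"
proof (induction w arbitrary: q)
  case Nil then show ?case by simp
next
  case (Cons a w)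
  have a: "a \<in> S" and w: "w \<in> lists S" using Cons.prems by auto
  have o: "out q a = [sg q a]" "t q a \<in> Q" using outq[OF Cons.prems(1) a] by auto
  have i: "sgi q (sg q a) = a" using i_sig[OF Cons.prems(1) a] .
  show ?case using o i Cons.IH[OF o(2) w] by simp
qed

lemma expa: "expanding_automaton Q' S t' out'"
  unfolding expanding_automaton_def
proof (rule conjI)
  show "finite S" using isa by (simp add: invertible_synchronous_automaton_def)
  show "\<forall>s\<in>Q'. \<forall>a\<in>S. t' s a \<in> Q' \<and> out' s a \<in> lists S \<and> out' s a \<noteq> []"
  proof (intro ballI)
  fix s a assume s: "s \<in> Q'" and a: "a \<in> S"
  show "t' s a \<in> Q' \<and> out' s a \<in> lists S \<and> out' s a \<noteq> []"
  proof -
    consider "s = z" | q where "q \<in> Q" "s = j1 q" | q where "q \<in> Q" "s = j2 q"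
      using s by (auto simp: Q'_def)
    then show ?thesis
    proof cases
      case 1 then show ?thesis using a by (simp add: Q'_def)
    next
      case 2 then show ?thesis using outq[of q a] a by (simp add: Q'_def)
    next
      case 3
      then have "sgi q a \<in> S" "t q (sgi q a) \<in> Q" using sig_i[of q a] outq[of q "sgi q a"] a by auto
      then show ?thesis using 3 by (simp add: Q'_def)
    qed
  qed
  qed
qed

abbreviation "A \<equiv> lists S"
abbreviation "BG \<equiv> BijGroup A"
abbreviation "sm q \<equiv> state_map S t out q"
abbreviation "sm' s \<equiv> state_map S t' out' s"

lemma sm_Bij: "q \<in> Q \<Longrightarrow> sm q \<in> Bij A"
proof -
  assume q: "q \<in> Q"
  have "bij_betw (induced t out q) A A"
  proof (rule bij_betw_byWitness[where f' = "induced t' out' (j2 q)"])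
    show "\<forall>w\<in>A. induced t' out' (j2 q) (induced t out q w) = w" by (simp add: ind2b q)
    show "\<forall>w\<in>A. induced t out q (induced t' out' (j2 q) w) = w" by (simp add: ind2a q)
    show "induced t out q ` A \<subseteq> A" by (rule image_subsetI) (rule ind_lists[OF q])
    show "induced t' out' (j2 q) ` A \<subseteq> A" by (rule image_subsetI) (rule ind2_lists[OF q])
  qed
  then have "bij_betw (sm q) A A" unfolding state_map_def
    by (rule bij_betw_cong[THEN iffD1, rotated]) simp
  then show ?thesis by (simp add: Bij_def state_map_def)
qed

lemma sm1: "sm' (j1 q) = sm q" if "q \<in> Q"
  using ind1[OF that] by (auto simp: state_map_def restrict_def)

lemma smz: "sm' z = \<one>\<^bsub>BG\<^esub>"
  using indz by (auto simp: state_map_def BijGroup_def restrict_def)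

lemma sm2: "sm' (j2 q) = inv\<^bsub>BG\<^esub> (sm q)" if q: "q \<in> Q"
proof -
  have "inv\<^bsub>BG\<^esub> (sm q) = (\<lambda>x\<in>A. inv_into A (sm q) x)"
    using sm_Bij[OF q] by (rule inv_BijGroup)
  also have "\<dots> = sm' (j2 q)"
  proof (rule ext)
    fix w
    show "(\<lambda>x\<in>A. inv_into A (sm q) x) w = sm' (j2 q) w"
    proof (cases "w \<in> A")
      case True
      have inj: "inj_on (sm q) A" using sm_Bij[OF q] by (simp add: Bij_def bij_betw_def)
      have xA: "induced t' out' (j2 q) w \<in> A" using ind2_lists[OF q True] .
      have "sm q (induced t' out' (j2 q) w) = w" using ind2a[OF q True] xA by (simp add: state_map_def)
      then have "inv_into A (sm q) w = induced t' out' (j2 q) w" using inv_into_f_eq[OF inj xA] by blast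
      then show ?thesis using True by (simp add: state_map_def)
    next
      case False then show ?thesis by (simp add: state_map_def)
    qed
  qed
  finally show ?thesis by simp
qed

lemma gen_Bij: "generate BG (sm ` Q) \<subseteq> Bij A"
proof -
  have "sm ` Q \<subseteq> carrier BG" using sm_Bij by (auto simp: BijGroup_def)
  then have "generate BG (sm ` Q) \<subseteq> carrier BG" by (rule group.generate_incl[OF group_BijGroup])
  then show ?thesis by (simp add: BijGroup_def)
qed

lemma multBG: "f \<in> Bij A \<Longrightarrow> g \<in> Bij A \<Longrightarrow> f \<otimes>\<^bsub>BG\<^esub> g = compose A f g"
  by (simp add: BijGroup_def)

lemma gens_eq: "gen_semigroup A (sm' ` Q') = generate BG (sm ` Q)"
proof
  show "gen_semigroup A (sm' ` Q') \<subseteq> generate BG (sm ` Q)"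
  proof
    fix f assume "f \<in> gen_semigroup A (sm' ` Q')"
    then show "f \<in> generate BG (sm ` Q)"
    proof (induction rule: gen_semigroup.induct)
      case (base f)
      then obtain s where s: "s \<in> Q'" "f = sm' s" by blast
      consider "s = z" | q where "q \<in> Q" "s = j1 q" | q where "q \<in> Q" "s = j2 q"
        using s by (auto simp: Q'_def)
      then show ?case
      proof cases
        case 1 then show ?thesis using s smz generate.one by metis
      next
        case 2 then show ?thesis using s sm1 generate.incl by (metis imageI)
      next
        case 3 then show ?thesis using s sm2 generate.inv by (metis imageI)
      qed
    next
      case (comp f g)
      have "compose A f g = f \<otimes>\<^bsub>BG\<^esub> g" using multBG gen_Bij comp.IH by (simp add: subset_iff)
      then show ?case using comp.IH generate.eng by metis
    qed
  qed
next
  show "generate BG (sm ` Q) \<subseteq> gen_semigroup A (sm' ` Q')"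
  proof
    fix f assume "f \<in> generate BG (sm ` Q)"
    then show "f \<in> gen_semigroup A (sm' ` Q')"
    proof (induction rule: generate.induct)
      case one
      have "z \<in> Q'" by (simp add: Q'_def)
      then show ?case using smz gen_semigroup.base by (metis imageI)
    next
      case (incl h)
      then obtain q where q: "q \<in> Q" "h = sm q" by blast
      have "j1 q \<in> Q'" using q by (simp add: Q'_def)
      then show ?case using q sm1 gen_semigroup.base by (metis imageI)
    next
      case (inv h)
      then obtain q where q: "q \<in> Q" "h = sm q" by blast
      have "j2 q \<in> Q'" using q by (simp add: Q'_def)
      then show ?case using q sm2 gen_semigroup.base by (metis imageI)
    next
      case (eng h1 h2)
      have "h1 \<otimes>\<^bsub>BG\<^esub> h2 = compose A h1 h2" using multBG gen_Bij eng.hyps by (simp add: subset_iff)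
      then show ?case using eng.IH gen_semigroup.comp by metis
    qed
  qed
qed

lemma easy_iso: "automaton_group_of Q S t out \<cong> automaton_semigroup_of Q' S t' out'"
proof (rule is_isoI)
  show "(\<lambda>x. x) \<in> iso (automaton_group_of Q S t out) (automaton_semigroup_of Q' S t' out')"
  proof (rule isoI)
    show "bij_betw (\<lambda>x. x) (carrier (automaton_group_of Q S t out)) (carrier (automaton_semigroup_of Q' S t' out'))"
      using gens_eq by (simp add: automaton_group_of_def automaton_semigroup_of_def map_semigroup_def bij_betw_def)
    show "(\<lambda>x. x) \<in> hom (automaton_group_of Q S t out) (automaton_semigroup_of Q' S t' out')"
      unfolding hom_def
    proof (intro CollectI conjI ballI)
      show "(\<lambda>x. x) \<in> carrier (automaton_group_of Q S t out) \<rightarrow> carrier (automaton_semigroup_of Q' S t' out')"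
        using gens_eq by (simp add: automaton_group_of_def automaton_semigroup_of_def map_semigroup_def)
      fix f g assume "f \<in> carrier (automaton_group_of Q S t out)" "g \<in> carrier (automaton_group_of Q S t out)"
      then have "f \<in> Bij A" "g \<in> Bij A" using gen_Bij by (auto simp: automaton_group_of_def)
      then show "f \<otimes>\<^bsub>automaton_group_of Q S t out\<^esub> g = f \<otimes>\<^bsub>automaton_semigroup_of Q' S t' out'\<^esub> g"
        using multBG by (simp add: automaton_group_of_def automaton_semigroup_of_def map_semigroup_def)
    qed
  qed
qed

end

lemma easy_dir:
  fixes Q :: "'q set" and z :: 'r and j1 j2 :: "'q \<Rightarrow> 'r"
  assumes "invertible_synchronous_automaton Q S t out" "inj j1" "inj j2"
    "z \<notin> range j1" "z \<notin> range j2" "range j1 \<inter> range j2 = {}"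
    "G \<cong> automaton_group_of Q S t out"
  shows "\<exists>t' out'. expanding_automaton (insert z (j1 ` Q \<union> j2 ` Q)) S t' out' \<and>
     G \<cong> automaton_semigroup_of (insert z (j1 ` Q \<union> j2 ` Q)) S t' out'"
proof -
  interpret easyctx Q S t out z j1 j2 using assms(1-6) by (simp add: easyctx_def)
  show ?thesis using expa easy_iso assms(7) iso_trans unfolding Q'_def by blast
qed




definition "k1 (q::nat set) = insert 0 (Suc ` q)"
definition "k2 (q::nat set) = Suc ` (insert 0 (Suc ` q))"

lemma k1_inj: "inj k1"
proof (rule injI)
  fix x y assume "k1 x = k1 y"
  then have "Suc ` x = Suc ` y" unfolding k1_def
    by (metis Diff_insert_absorb Zero_not_Suc imageE)
  then show "x = y" by (simp add: inj_image_eq_iff)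
qed

lemma k2_inj: "inj k2"
proof (rule injI)
  fix x y assume "k2 x = k2 y"
  then have "k1 x = k1 y" unfolding k2_def k1_def[symmetric] by (simp add: inj_image_eq_iff)
  then show "x = y" using k1_inj by (simp add: inj_eq)
qed

lemma k_facts: "{} \<notin> range k1" "{} \<notin> range k2" "range k1 \<inter> range k2 = {}"
  by (auto simp: k1_def k2_def)

lemma n_facts: "(0::nat) \<notin> range (\<lambda>n::nat. 2*n+1)" "(0::nat) \<notin> range (\<lambda>n::nat. 2*n+2)"
   "range (\<lambda>n::nat. 2*n+1) \<inter> range (\<lambda>n::nat. 2*n+2) = {}" "inj (\<lambda>n::nat. 2*n+1)" "inj (\<lambda>n::nat. 2*n+2)"
  by (auto simp: inj_def) presburger

theorem mainTheorem10:
  fixes G :: "('g, 'b) monoid_scheme"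
  assumes "group G"
  shows "(iso_automaton_group G \<longleftrightarrow> iso_expanding_automaton_semigroup G) \<and>
         (iso_self_similar_group G \<longleftrightarrow> iso_expanding_self_similar_semigroup G)"
proof (intro conjI iffI)
  assume "iso_automaton_group G"
  then obtain Q :: "nat set" and S t out where h: "finite Q" "invertible_synchronous_automaton Q S t out"
    "G \<cong> automaton_group_of Q S t out" by (auto simp: iso_automaton_group_def)
  obtain t' out' where "expanding_automaton (insert 0 ((\<lambda>n. 2*n+1) ` Q \<union> (\<lambda>n. 2*n+2) ` Q)) S t' out'"
    "G \<cong> automaton_semigroup_of (insert 0 ((\<lambda>n. 2*n+1) ` Q \<union> (\<lambda>n. 2*n+2) ` Q)) S t' out'"
    using easy_dir[OF h(2) n_facts(4,5,1,2,3) h(3)] by blast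
  moreover have "finite (insert (0::nat) ((\<lambda>n. 2*n+1) ` Q \<union> (\<lambda>n. 2*n+2) ` Q))" using h(1) by simp
  ultimately show "iso_expanding_automaton_semigroup G" unfolding iso_expanding_automaton_semigroup_def by blast
next
  assume "iso_expanding_automaton_semigroup G"
  then obtain Q :: "nat set" and S t out where h: "finite Q" "expanding_automaton Q S t out"
    "G \<cong> automaton_semigroup_of Q S t out" by (auto simp: iso_expanding_automaton_semigroup_def)
  then show "iso_automaton_group G" using hard_dir[OF h(2) assms h(3)] unfolding iso_automaton_group_def by blast
next
  assume "iso_self_similar_group G"
  then obtain Q :: "nat set set" and S t out where h: "invertible_synchronous_automaton Q S t out"
    "G \<cong> automaton_group_of Q S t out" by (auto simp: iso_self_similar_group_def)
  show "iso_expanding_self_similar_semigroup G"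
    using easy_dir[OF h(1) k1_inj k2_inj k_facts h(2)] unfolding iso_expanding_self_similar_semigroup_def by blast
next
  assume "iso_expanding_self_similar_semigroup G"
  then obtain Q :: "nat set set" and S t out where h: "expanding_automaton Q S t out"
    "G \<cong> automaton_semigroup_of Q S t out" by (auto simp: iso_expanding_self_similar_semigroup_def)
  then show "iso_self_similar_group G" using hard_dir[OF h(1) assms h(2)] unfolding iso_self_similar_group_def by blast
qed


end
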